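(* Let $q$ be a prime power and let $d,\tau,n,m$ be integers with $\lfloor (d-1)/2\rfloor\le\tau<d\le n\le m$. Let $\mathcal C\subseteq\mathbb F_{q^m}^n$ be any (not necessarily linear) code with minimum rank distance $d$. Then $$\ell=\max_{\mathbf r\in\mathbb F_{q^m}^n}|\mathcal C\cap\mathcal B_\tau(\mathbf r)|\ \le\ 1+\sum_{t=\lfloor (d-1)/2\rfloor+1}^{\tau}\frac{\binom{n}{2t+1-d}_q}{\binom{t}{2t+1-d}_q}\ \le\ 1+4\sum_{t=\lfloor (d-1)/2\rfloor+1}^{\tau}q^{(2t-d+1)(n-t)}$$ $$\le\ 1+4\Big(\tau-\big\lfloor\tfrac{d-1}{2}\big\rfloor\Big)\,q^{(2\tau-d+1)(n-\lfloor (d-1)/2\rfloor-1)}.$$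
   Context: Fixing a basis of $\mathbb F_{q^m}$ over $\mathbb F_q$, each vector $\mathbf x\in\mathbb F_{q^m}^n$ is identified with an $m\times n$ matrix over $\mathbb F_q$; $\mathrm{rk}(\mathbf x)$ is the rank of this matrix and the rank distance is $\mathrm{rk}(\mathbf x-\mathbf y)$. The minimum rank distance of $\mathcal C$ is $\min\{\mathrm{rk}(\mathbf c_1-\mathbf c_2):\mathbf c_1\ne\mathbf c_2\in\mathcal C\}$. $\mathcal B_\tau(\mathbf r)=\{\mathbf x:\mathrm{rk}(\mathbf x-\mathbf r)\le\tau\}$. The Gaussian binomial is $\binom{n}{r}_q=\prod_{i=0}^{r-1}\frac{q^n-q^i}{q^r-q^i}$. *)

theory Defs
  imports Complex_Main "Jordan_Normal_Form.DL_Rank"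
begin

text \<open>Vectors of F_{q^m}^n are identified (via a fixed F_q-basis of F_{q^m}) with
  m x n matrices over F_q. The rank of x is the rank of this matrix.\<close>

definition rk :: "nat \<Rightarrow> 'a::field mat \<Rightarrow> nat" where
  "rk m A = vec_space.rank m (A :: 'a mat)"

definition rank_dist :: "nat \<Rightarrow> 'a::field mat \<Rightarrow> 'a mat \<Rightarrow> nat" where
  "rank_dist m x y = rk m (x - y)"

definition min_rank_distance :: "nat \<Rightarrow> 'a::field mat set \<Rightarrow> nat \<Rightarrow> bool" where
  "min_rank_distance m C d \<longleftrightarrow>
     (\<exists>c1\<in>C. \<exists>c2\<in>C. c1 \<noteq> c2 \<and> rank_dist m c1 c2 = d) \<and>
     (\<forall>c1\<in>C. \<forall>c2\<in>C. c1 \<noteq> c2 \<longrightarrow> d \<le> rank_dist m c1 c2)"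

definition rank_ball :: "nat \<Rightarrow> nat \<Rightarrow> nat \<Rightarrow> 'a::field mat \<Rightarrow> 'a mat set" where
  "rank_ball m n \<tau> r = {x \<in> carrier_mat m n. rank_dist m x r \<le> \<tau>}"

definition gauss_binom :: "nat \<Rightarrow> nat \<Rightarrow> nat \<Rightarrow> real" where
  "gauss_binom q n r = (\<Prod>i<r. (real q ^ n - real q ^ i) / (real q ^ r - real q ^ i))"

end

theory Submission
  imports Defs "HOL-Library.Function_Algebras"
begin


definition fsc :: "'a::field \<Rightarrow> (nat \<Rightarrow> 'a) \<Rightarrow> (nat \<Rightarrow> 'a)" where
  "fsc c f = (\<lambda>i. c * f i)"

interpretation fv: vector_space "fsc :: 'a::field \<Rightarrow> _"
  by unfold_locales (auto simp: fsc_def fun_eq_iff algebra_simps)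

lemma sum_fun_apply: "(sum f A) i = (\<Sum>a\<in>A. f a i)"
  by (induct A rule: infinite_finite_induct) auto

lemma fsc_apply: "fsc c f i = c * f i" by (simp add: fsc_def)

lemma span_card:
  fixes B :: "(nat \<Rightarrow> 'a::{field,finite}) set"
  assumes fin: "finite B" and ind: "fv.independent B"
  shows "finite (fv.span B) \<and> card (fv.span B) = card (UNIV::'a set) ^ card B"
proof -
  let ?g = "\<lambda>u. \<Sum>v\<in>B. fsc (u v) v"
  let ?P = "PiE B (\<lambda>_. UNIV :: 'a set)"
  have eq: "fv.span B = ?g ` ?P"
  proof
    show "fv.span B \<subseteq> ?g ` ?P"
    proof
      fix x assume "x \<in> fv.span B"
      then obtain u where u: "x = ?g u" using fv.span_finite[OF fin] by auto
      have "x = ?g (restrict u B)" unfolding u by (rule sum.cong) auto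
      moreover have "restrict u B \<in> ?P" by auto
      ultimately show "x \<in> ?g ` ?P" by blast
    qed
    show "?g ` ?P \<subseteq> fv.span B" using fv.span_finite[OF fin] by auto
  qed
  have inj: "inj_on ?g ?P"
  proof
    fix u w assume u: "u \<in> ?P" and w: "w \<in> ?P" and e: "?g u = ?g w"
    have "(\<Sum>v\<in>B. fsc (u v - w v) v) = ?g u - ?g w"
      by (simp add: fv.scale_left_diff_distrib sum_subtractf)
    also have "\<dots> = 0" using e by simp
    finally have z: "(\<Sum>v\<in>B. fsc (u v - w v) v) = 0" .
    have "\<forall>v\<in>B. u v - w v = 0"
      using fv.independentD[OF ind fin order_refl z] by blast
    then show "u = w" by (intro PiE_ext[OF u w]) simp
  qed
  have "card (fv.span B) = card ?P" unfolding eq by (rule card_image[OF inj])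
  also have "\<dots> = card (UNIV::'a set) ^ card B" by (simp add: card_PiE fin)
  finally have c: "card (fv.span B) = card (UNIV::'a set) ^ card B" .
  have "finite (?g ` ?P)" using fin by (intro finite_imageI finite_PiE) auto
  then have "finite (fv.span B)" by (simp only: eq)
  with c show ?thesis by blast
qed

definition LI :: "(nat \<Rightarrow> 'a::field) set \<Rightarrow> nat \<Rightarrow> (nat \<Rightarrow> 'a) list set" where
  "LI V k = {xs. length xs = k \<and> distinct xs \<and> set xs \<subseteq> V \<and> fv.independent (set xs)}"

lemma LI_mono: "V \<subseteq> W \<Longrightarrow> LI V k \<subseteq> LI W k"
  unfolding LI_def by auto

lemma span_basis_card:
  fixes P :: "(nat \<Rightarrow> 'a::{field,finite}) set"
  assumes fin: "finite P"
  shows "finite (fv.span P) \<and> card (fv.span P) = card (UNIV::'a set) ^ fv.dim P"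
proof -
  obtain B where B: "B \<subseteq> P" "fv.independent B" "P \<subseteq> fv.span B" "card B = fv.dim P"
    using fv.basis_exists by blast
  have fB: "finite B" using B fin finite_subset by blast
  have "fv.span B = fv.span P"
    using B by (metis fv.span_mono fv.span_span subset_antisym)
  then show ?thesis using span_card[OF fB B(2)] B(4) by simp
qed

lemma LI_card:
  fixes P :: "(nat \<Rightarrow> 'a::{field,finite}) set"
  assumes fin: "finite P"
  shows "finite (LI (fv.span P) k) \<and> card (LI (fv.span P) k) = (\<Prod>i<k. card (UNIV::'a set) ^ fv.dim P - card (UNIV::'a set) ^ i)"
proof (induction k)
  case 0
  have "LI (fv.span P) 0 = {[]}" unfolding LI_def using fv.independent_empty by auto
  then show ?case by simp
next
  case (Suc k)
  let ?V = "fv.span P"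
  let ?q = "card (UNIV::'a set)"
  have fV: "finite ?V" and cV: "card ?V = ?q ^ fv.dim P" using span_basis_card[OF fin] by auto
  have eq: "LI ?V (Suc k) = (\<lambda>(xs,v). v#xs) ` (SIGMA xs:LI ?V k. ?V - fv.span (set xs))"
  proof
    show "LI ?V (Suc k) \<subseteq> (\<lambda>(xs,v). v#xs) ` (SIGMA xs:LI ?V k. ?V - fv.span (set xs))"
    proof
      fix ys assume "ys \<in> LI ?V (Suc k)"
      then obtain v xs where ys: "ys = v # xs" and l: "length xs = k" and d: "distinct (v#xs)"
        and s: "set (v#xs) \<subseteq> ?V" and i: "fv.independent (insert v (set xs))"
        unfolding LI_def by (cases ys) auto
      have "v \<notin> set xs" using d by simp
      then have "fv.independent (set xs) \<and> v \<notin> fv.span (set xs)"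
        using i fv.independent_insert by metis
      then have "(xs, v) \<in> (SIGMA xs:LI ?V k. ?V - fv.span (set xs))"
        using l d s unfolding LI_def by auto
      then show "ys \<in> (\<lambda>(xs,v). v#xs) ` (SIGMA xs:LI ?V k. ?V - fv.span (set xs))"
        unfolding ys by force
    qed
    show "(\<lambda>(xs,v). v#xs) ` (SIGMA xs:LI ?V k. ?V - fv.span (set xs)) \<subseteq> LI ?V (Suc k)"
    proof clarify
      fix xs v assume xs: "xs \<in> LI ?V k" and v: "v \<in> ?V" "v \<notin> fv.span (set xs)"
      have "v \<notin> set xs" using v fv.span_base by blast
      moreover have "fv.independent (insert v (set xs))"
        using xs v fv.independent_insertI unfolding LI_def by auto
      ultimately show "v # xs \<in> LI ?V (Suc k)" using xs v unfolding LI_def by auto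
    qed
  qed
  have inj: "inj_on (\<lambda>(xs,v). v#xs) (SIGMA xs:LI ?V k. ?V - fv.span (set xs))"
    by (auto simp: inj_on_def)
  have fLI: "finite (LI ?V k)" using Suc.IH by simp
  have each: "card (?V - fv.span (set xs)) = ?q ^ fv.dim P - ?q ^ k" if "xs \<in> LI ?V k" for xs
  proof -
    have "set xs \<subseteq> ?V" using that unfolding LI_def by auto
    then have sub: "fv.span (set xs) \<subseteq> ?V"
      by (rule fv.span_minimal[OF _ fv.subspace_span])
    have "card (fv.span (set xs)) = ?q ^ card (set xs)"
      using span_card[of "set xs"] that unfolding LI_def by auto
    also have "card (set xs) = k" using that unfolding LI_def by (auto simp: distinct_card)
    finally have c: "card (fv.span (set xs)) = ?q ^ k" .
    have "finite (fv.span (set xs))" using sub fV finite_subset by blast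
    then show ?thesis using card_Diff_subset[OF _ sub] c cV by simp
  qed
  have fin2: "finite (SIGMA xs:LI ?V k. ?V - fv.span (set xs))"
    using fLI fV by auto
  have "card (LI ?V (Suc k)) = card (SIGMA xs:LI ?V k. ?V - fv.span (set xs))"
    unfolding eq by (rule card_image[OF inj])
  also have "\<dots> = (\<Sum>xs\<in>LI ?V k. card (?V - fv.span (set xs)))"
    by (rule card_SigmaI) (use fLI fV in auto)
  also have "\<dots> = (\<Sum>xs\<in>LI ?V k. ?q ^ fv.dim P - ?q ^ k)"
    by (rule sum.cong) (auto simp: each)
  also have "\<dots> = card (LI ?V k) * (?q ^ fv.dim P - ?q ^ k)" by simp
  also have "\<dots> = (\<Prod>i<Suc k. ?q ^ fv.dim P - ?q ^ i)" using Suc.IH by simp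
  finally show ?case using eq fin2 by simp
qed



lemma dim_rows_le_cols:
  fixes g :: "nat \<Rightarrow> nat \<Rightarrow> 'a::field"
  shows "fv.dim ((\<lambda>i. \<lambda>j. if j < n then g i j else 0) ` {..<m})
       \<le> fv.dim ((\<lambda>j. \<lambda>i. if i < m then g i j else 0) ` {..<n})"
proof -
  define col where "col = (\<lambda>j. \<lambda>i. if i < m then g i j else (0::'a))"
  define row where "row = (\<lambda>i. \<lambda>j. if j < n then g i j else (0::'a))"
  let ?C = "col ` {..<n}"
  obtain B where B: "B \<subseteq> ?C" "fv.independent B" "?C \<subseteq> fv.span B" "card B = fv.dim ?C"
    using fv.basis_exists by blast
  have fB: "finite B" using B(1) finite_subset by blast
  have "\<forall>j. \<exists>u. j < n \<longrightarrow> col j = (\<Sum>b\<in>B. fsc (u b) b)"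
  proof
    fix j show "\<exists>u. j < n \<longrightarrow> col j = (\<Sum>b\<in>B. fsc (u b) b)"
    proof (cases "j < n")
      case True
      then have "col j \<in> fv.span B" using B(3) by auto
      then show ?thesis using fv.span_finite[OF fB] by auto
    qed auto
  qed
  then obtain U where U: "\<And>j. j < n \<Longrightarrow> col j = (\<Sum>b\<in>B. fsc (U j b) b)"
    by metis
  define w where "w = (\<lambda>b. \<lambda>j. if j < n then U j b else (0::'a))"
  have rows: "row ` {..<m} \<subseteq> fv.span (w ` B)"
  proof
    fix x assume "x \<in> row ` {..<m}"
    then obtain i where i: "i < m" and x: "x = row i" by auto
    have "x = (\<Sum>b\<in>B. fsc (b i) (w b))"
    proof
      fix j
      show "x j = (\<Sum>b\<in>B. fsc (b i) (w b)) j"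
      proof (cases "j < n")
        case True
        have "g i j = col j i" using i by (simp add: col_def)
        also have "\<dots> = (\<Sum>b\<in>B. U j b * b i)" using U[OF True] by (simp add: sum_fun_apply fsc_apply)
        finally show ?thesis using True by (simp add: x row_def w_def sum_fun_apply fsc_apply mult.commute)
      next
        case False
        then show ?thesis by (simp add: x row_def w_def sum_fun_apply fsc_apply)
      qed
    qed
    also have "\<dots> \<in> fv.span (w ` B)"
      by (intro fv.span_sum fv.span_scale fv.span_base) auto
    finally show "x \<in> fv.span (w ` B)" .
  qed
  have "fv.dim (row ` {..<m}) \<le> card (w ` B)"
    by (rule fv.dim_le_card[OF rows]) (use fB in auto)
  also have "\<dots> \<le> card B" using fB by (rule card_image_le)
  finally show ?thesis using B(4) unfolding row_def col_def by simp
qed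

lemma dim_rows_eq_cols:
  fixes g :: "nat \<Rightarrow> nat \<Rightarrow> 'a::field"
  shows "fv.dim ((\<lambda>i. \<lambda>j. if j < n then g i j else 0) ` {..<m})
       = fv.dim ((\<lambda>j. \<lambda>i. if i < m then g i j else 0) ` {..<n})"
  using dim_rows_le_cols[of n g m] dim_rows_le_cols[of m "\<lambda>i j. g j i" n] by simp



definition vfun :: "'a::field vec \<Rightarrow> (nat \<Rightarrow> 'a)" where
  "vfun v = (\<lambda>i. if i < dim_vec v then v $ i else 0)"

context vec_space
begin

lemma vfun_inj: "inj_on vfun (carrier_vec n)"
proof
  fix v w assume v: "v \<in> carrier_vec n" and w: "w \<in> carrier_vec n" and e: "vfun v = vfun w"
  show "v = w"
  proof (rule eq_vecI)
    show "dim_vec v = dim_vec w" using v w by simp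
    fix i assume "i < dim_vec w"
    then show "v $ i = w $ i" using fun_cong[OF e, of i] v w by (simp add: vfun_def)
  qed
qed

lemma lin_dep_bridge:
  assumes S: "S \<subseteq> carrier_vec n"
  shows "lin_dep S \<longleftrightarrow> fv.dependent (vfun ` S)"
proof
  assume "lin_dep S"
  then obtain A a v where A: "finite A" "A \<subseteq> S" "lincomb a A = 0\<^sub>v n" "v \<in> A" "a v \<noteq> 0"
    unfolding lin_dep_def by auto
  have AC: "A \<subseteq> carrier_vec n" using A S by auto
  have injA: "inj_on vfun A" using vfun_inj AC inj_on_subset by blast
  define u where "u = (\<lambda>f. a (inv_into A vfun f))"
  have "(\<Sum>f\<in>vfun ` A. fsc (u f) f) = (\<Sum>x\<in>A. fsc (u (vfun x)) (vfun x))"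
    by (subst sum.reindex[OF injA]) (simp add: comp_def)
  also have "\<dots> = (\<Sum>x\<in>A. fsc (a x) (vfun x))"
    by (rule sum.cong) (auto simp: u_def inv_into_f_f[OF injA])
  also have "\<dots> = 0"
  proof
    fix i
    show "(\<Sum>x\<in>A. fsc (a x) (vfun x)) i = 0 i"
    proof (cases "i < n")
      case True
      have "(\<Sum>x\<in>A. fsc (a x) (vfun x)) i = (\<Sum>x\<in>A. a x * x $ i)"
        using AC True by (auto simp: sum_fun_apply fsc_apply vfun_def intro!: sum.cong)
      also have "\<dots> = lincomb a A $ i" using lincomb_index[OF True AC] by simp
      also have "\<dots> = 0" using A(3) True by simp
      finally show ?thesis by simp
    next
      case False
      then show ?thesis using AC by (auto simp: sum_fun_apply fsc_apply vfun_def intro!: sum.neutral)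
    qed
  qed
  finally have z: "(\<Sum>f\<in>vfun ` A. fsc (u f) f) = 0" .
  have "u (vfun v) \<noteq> 0" using A(4,5) by (simp add: u_def inv_into_f_f[OF injA])
  then show "fv.dependent (vfun ` S)"
    unfolding fv.dependent_explicit using z A(1,2,4)
    by (intro exI[of _ "vfun ` A"] exI[of _ u]) auto
next
  assume "fv.dependent (vfun ` S)"
  then obtain t u where t: "finite t" "t \<subseteq> vfun ` S" "(\<Sum>f\<in>t. fsc (u f) f) = 0" and
    w: "\<exists>f\<in>t. u f \<noteq> 0"
    unfolding fv.dependent_explicit by blast
  obtain A where A: "A \<subseteq> S" "t = vfun ` A" using t(2) subset_imageE by metis
  have AC: "A \<subseteq> carrier_vec n" using A S by auto
  have injA: "inj_on vfun A" using vfun_inj AC inj_on_subset by blast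
  have fA: "finite A" using t(1) A(2) injA finite_image_iff by blast
  define a where "a = (\<lambda>x. u (vfun x))"
  have "lincomb a A = 0\<^sub>v n"
  proof (rule eq_vecI)
    show "dim_vec (lincomb a A) = dim_vec (0\<^sub>v n)" using lincomb_dim[OF fA AC] by simp
    fix i assume "i < dim_vec (0\<^sub>v n)"
    then have i: "i < n" by simp
    have "lincomb a A $ i = (\<Sum>x\<in>A. a x * x $ i)" using lincomb_index[OF i AC] by simp
    also have "\<dots> = (\<Sum>x\<in>A. fsc (u (vfun x)) (vfun x)) i"
      using AC i by (auto simp: sum_fun_apply fsc_apply vfun_def a_def intro!: sum.cong)
    also have "(\<Sum>x\<in>A. fsc (u (vfun x)) (vfun x)) = (\<Sum>f\<in>t. fsc (u f) f)"
      unfolding A(2) by (subst sum.reindex[OF injA]) (simp add: comp_def)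
    finally show "lincomb a A $ i = 0\<^sub>v n $ i" using t(3) i by simp
  qed
  moreover obtain v where "v \<in> A" "a v \<noteq> 0" using w A(2) a_def by auto
  ultimately show "lin_dep S" unfolding lin_dep_def using fA A(1)
    by (intro exI[of _ A] exI[of _ a] exI[of _ v]) auto
qed

lemma rank_eq_fdim:
  assumes A: "A \<in> carrier_mat n nc"
  shows "rank A = fv.dim (vfun ` set (cols A))"
proof -
  let ?P = "\<lambda>T. T \<subseteq> set (cols A) \<and> lin_indpt T"
  have colsC: "set (cols A) \<subseteq> carrier_vec n" using A cols_dim by blast
  have "lin_indpt {}" using lin_dep_bridge[of "{}"] fv.independent_empty by simp
  then obtain S where S: "finite S" "maximal S ?P"
    using maximal_exists_superset[of "set (cols A)" ?P "{}"] by auto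
  have r: "rank A = card S" using rank_card_indpt[OF A S(2)] .
  have SC: "S \<subseteq> set (cols A)" and Si: "lin_indpt S" using S(2) unfolding maximal_def by auto
  have injS: "inj_on vfun S" using vfun_inj SC colsC inj_on_subset by blast
  have ind: "fv.independent (vfun ` S)" using lin_dep_bridge[of S] SC colsC Si by auto
  have sp: "vfun ` set (cols A) \<subseteq> fv.span (vfun ` S)"
  proof
    fix f assume "f \<in> vfun ` set (cols A)"
    then obtain c where c: "c \<in> set (cols A)" "f = vfun c" by auto
    show "f \<in> fv.span (vfun ` S)"
    proof (cases "c \<in> S")
      case True then show ?thesis using c by (intro fv.span_base) auto
    next
      case False
      then have "\<not> ?P (insert c S)" using S(2) c unfolding maximal_def by blast
      then have "lin_dep (insert c S)" using SC c by auto
      then have "fv.dependent (vfun ` insert c S)"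
        using lin_dep_bridge[of "insert c S"] SC c colsC by auto
      moreover have "vfun c \<notin> vfun ` S"
        using False c SC colsC vfun_inj unfolding inj_on_def by blast
      ultimately show ?thesis using ind c fv.independent_insert[of "vfun c" "vfun ` S"] by auto
    qed
  qed
  have "card (vfun ` S) = fv.dim (vfun ` set (cols A))"
    by (rule fv.basis_card_eq_dim) (use SC sp ind in auto)
  then show ?thesis using r card_image[OF injS] by simp
qed

end

definition rowsF :: "'a::field mat \<Rightarrow> (nat \<Rightarrow> 'a) set" where
  "rowsF A = (\<lambda>i. \<lambda>j. if j < dim_col A then A $$ (i,j) else 0) ` {..<dim_row A}"

lemma rk_eq_rows:
  fixes A :: "'a::field mat"
  assumes A: "A \<in> carrier_mat m n"
  shows "rk m A = fv.dim (rowsF A)"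
proof -
  have r: "rk m A = fv.dim (vfun ` set (cols A))"
    unfolding rk_def using vec_space.rank_eq_fdim[OF A] .
  have eq: "vfun ` set (cols A) = (\<lambda>j. \<lambda>i. if i < m then A $$ (i,j) else 0) ` {..<n}"
  proof -
    have "set (cols A) = col A ` {..<n}" using A by (auto simp: cols_def)
    moreover have "vfun (col A j) = (\<lambda>i. if i < m then A $$ (i,j) else 0)" if "j < n" for j
      using A that by (auto simp: vfun_def)
    ultimately show ?thesis by (auto simp: image_image)
  qed
  have "fv.dim (vfun ` set (cols A)) = fv.dim (rowsF A)"
    unfolding eq
    using dim_rows_eq_cols[of n "\<lambda>i j. A $$ (i,j)" m] A unfolding rowsF_def by simp
  with r show ?thesis by simp
qed



lemma dim_union_bound:
  fixes P Q :: "(nat \<Rightarrow> 'a::field) set"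
  assumes fP: "finite P" and fQ: "finite Q" and XP: "X \<subseteq> fv.span P" and XQ: "X \<subseteq> fv.span Q"
    and iX: "fv.independent X" and R: "R \<subseteq> fv.span (P \<union> Q)"
  shows "fv.dim R + card X \<le> fv.dim P + fv.dim Q"
proof -
  obtain BP where BP: "X \<subseteq> BP" "BP \<subseteq> fv.span P" "fv.independent BP" "fv.span P \<subseteq> fv.span BP"
    using fv.maximal_independent_subset_extend[OF XP iX] by blast
  obtain BQ where BQ: "X \<subseteq> BQ" "BQ \<subseteq> fv.span Q" "fv.independent BQ" "fv.span Q \<subseteq> fv.span BQ"
    using fv.maximal_independent_subset_extend[OF XQ iX] by blast
  have fBP: "finite BP" using fv.independent_span_bound[OF fP BP(3) BP(2)] by simp
  have fBQ: "finite BQ" using fv.independent_span_bound[OF fQ BQ(3) BQ(2)] by simp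
  have cBP: "card BP = fv.dim P"
    using fv.basis_card_eq_dim[OF BP(2) BP(4) BP(3)] by simp
  have cBQ: "card BQ = fv.dim Q"
    using fv.basis_card_eq_dim[OF BQ(2) BQ(4) BQ(3)] by simp
  have "P \<union> Q \<subseteq> fv.span (BP \<union> BQ)"
    using BP(4) BQ(4) fv.span_superset[of P] fv.span_superset[of Q]
      fv.span_mono[of BP "BP \<union> BQ"] fv.span_mono[of BQ "BP \<union> BQ"] by blast
  then have "fv.span (P \<union> Q) \<subseteq> fv.span (BP \<union> BQ)"
    by (metis fv.span_mono fv.span_span)
  then have "fv.dim R \<le> card (BP \<union> BQ)"
    using R fBP fBQ by (intro fv.dim_le_card) auto
  moreover have "card (BP \<union> BQ) + card (BP \<inter> BQ) = card BP + card BQ"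
    using card_Un_Int[OF fBP fBQ] by simp
  moreover have "card X \<le> card (BP \<inter> BQ)"
    using BP(1) BQ(1) fBP by (intro card_mono) auto
  ultimately show ?thesis using cBP cBQ by linarith
qed

lemma finite_rowsF: "finite (rowsF A)" unfolding rowsF_def by simp

lemma rows_diff:
  fixes A B R :: "'a::field mat"
  assumes A: "A \<in> carrier_mat m n" and B: "B \<in> carrier_mat m n" and R: "R \<in> carrier_mat m n"
  shows "rowsF (A - B) \<subseteq> fv.span (rowsF (A - R) \<union> rowsF (B - R))"
proof
  fix f assume "f \<in> rowsF (A - B)"
  then obtain i where i: "i < m" and f: "f = (\<lambda>j. if j < n then (A - B) $$ (i,j) else 0)"
    using A B unfolding rowsF_def by auto
  let ?a = "\<lambda>j. if j < n then (A - R) $$ (i,j) else 0"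
  let ?b = "\<lambda>j. if j < n then (B - R) $$ (i,j) else 0"
  have "?a \<in> rowsF (A - R)" "?b \<in> rowsF (B - R)"
    using A B R i unfolding rowsF_def by auto
  then have "?a - ?b \<in> fv.span (rowsF (A - R) \<union> rowsF (B - R))"
    by (intro fv.span_diff fv.span_base) auto
  moreover have "f = ?a - ?b"
    using A B R i by (auto simp: f fun_eq_iff)
  ultimately show "f \<in> fv.span (rowsF (A - R) \<union> rowsF (B - R))" by simp
qed

definition stdE :: "nat \<Rightarrow> (nat \<Rightarrow> 'a::field) set" where
  "stdE n = (\<lambda>j. \<lambda>i. if i = j then 1 else 0) ` {..<n}"

lemma stdE_props:
  "finite (stdE n :: (nat \<Rightarrow> 'a::field) set) \<and> fv.independent (stdE n :: (nat \<Rightarrow> 'a) set)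
   \<and> fv.dim (stdE n :: (nat \<Rightarrow> 'a) set) = n"
proof -
  let ?d = "\<lambda>j. \<lambda>i. if i = j then (1::'a) else 0"
  have inj: "inj_on ?d {..<n}" by (auto simp: inj_on_def fun_eq_iff split: if_splits)
  have ind: "fv.independent (stdE n :: (nat \<Rightarrow> 'a) set)"
    unfolding fv.independent_explicit_module
  proof (intro allI impI)
    fix t u v assume t: "finite t" "t \<subseteq> (stdE n :: (nat \<Rightarrow> 'a) set)"
      and z: "(\<Sum>v\<in>t. fsc (u v) v) = 0" and v: "v \<in> t"
    obtain j where j: "v = ?d j" using v t unfolding stdE_def by auto
    have "0 = (\<Sum>w\<in>t. fsc (u w) w) j" using z by simp
    also have "\<dots> = (\<Sum>w\<in>t. u w * w j)" by (simp add: sum_fun_apply fsc_apply)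
    also have "\<dots> = u v * v j"
    proof (rule sum.remove[OF t(1) v, THEN trans])
      have "(\<Sum>w\<in>t - {v}. u w * w j) = 0"
      proof (rule sum.neutral, rule ballI)
        fix w assume w: "w \<in> t - {v}"
        then obtain l where l: "w = ?d l" using t unfolding stdE_def by auto
        then have "l \<noteq> j" using w j by auto
        then show "u w * w j = 0" using l by simp
      qed
      then show "u v * v j + (\<Sum>w\<in>t - {v}. u w * w j) = u v * v j" by simp
    qed
    also have "\<dots> = u v" using j by simp
    finally show "u v = 0" by simp
  qed
  have "card (stdE n :: (nat \<Rightarrow> 'a) set) = n" unfolding stdE_def using card_image[OF inj] by simp
  then show ?thesis using ind fv.dim_eq_card_independent[OF ind] unfolding stdE_def by simp
qed

lemma in_span_stdE:
  fixes f :: "nat \<Rightarrow> 'a::field"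
  assumes "\<And>j. j \<ge> n \<Longrightarrow> f j = 0"
  shows "f \<in> fv.span (stdE n)"
proof -
  let ?d = "\<lambda>j. \<lambda>i. if i = j then (1::'a) else 0"
  have "f = (\<Sum>j<n. fsc (f j) (?d j))"
  proof
    fix l
    show "f l = (\<Sum>j<n. fsc (f j) (?d j)) l"
    proof (cases "l < n")
      case True
      have "(\<Sum>j<n. fsc (f j) (?d j)) l = (\<Sum>j<n. f j * (if l = j then 1 else 0))"
        by (simp add: sum_fun_apply fsc_apply)
      also have "\<dots> = (\<Sum>j<n. if l = j then f j else 0)"
        by (rule sum.cong) auto
      also have "\<dots> = f l" using True by (simp add: sum.delta)
      finally show ?thesis by simp
    next
      case False
      then show ?thesis using assms by (auto simp: sum_fun_apply fsc_apply intro!: sum.neutral)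
    qed
  qed
  also have "\<dots> \<in> fv.span (stdE n)"
    by (intro fv.span_sum fv.span_scale fv.span_base) (auto simp: stdE_def)
  finally show ?thesis .
qed

lemma rowsF_stdE:
  fixes A :: "'a::field mat"
  assumes A: "A \<in> carrier_mat m n"
  shows "fv.span (rowsF A) \<subseteq> fv.span (stdE n)"
proof -
  have "rowsF A \<subseteq> fv.span (stdE n)"
    using A unfolding rowsF_def by (auto intro!: in_span_stdE)
  then show ?thesis by (metis fv.span_mono fv.span_span)
qed

lemma finite_carrier_mat:
  "finite (carrier_mat m n :: 'a::finite mat set)"
proof -
  let ?I = "{..<m} \<times> {..<n}"
  have "carrier_mat m n \<subseteq> (\<lambda>f. mat m n f) ` (PiE ?I (\<lambda>_. UNIV :: 'a set))"
  proof
    fix A :: "'a mat" assume A: "A \<in> carrier_mat m n"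
    have "A = mat m n (restrict (\<lambda>ij. A $$ ij) ?I)"
      using A by (intro eq_matI) auto
    moreover have "restrict (\<lambda>ij. A $$ ij) ?I \<in> PiE ?I (\<lambda>_. UNIV)" by simp
    ultimately show "A \<in> (\<lambda>f. mat m n f) ` (PiE ?I (\<lambda>_. UNIV))" by (rule image_eqI)
  qed
  moreover have "finite ((\<lambda>f. mat m n f) ` (PiE ?I (\<lambda>_. UNIV :: 'a set)))"
    by (intro finite_imageI finite_PiE) auto
  ultimately show ?thesis using finite_subset by blast
qed



lemma prod_one_minus_pow_aux:
  fixes x :: real
  assumes x0: "0 \<le> x" and x1: "x \<le> 1/2"
  shows "k \<ge> 1 \<Longrightarrow> (\<Prod>i<k. 1 - x ^ Suc i) \<ge> 1/4 + x ^ k / 2"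
proof (induction k)
  case 0 then show ?case by simp
next
  case (Suc k)
  show ?case
  proof (cases "k = 0")
    case True then show ?thesis using x1 by simp
  next
    case False
    then have IH: "(\<Prod>i<k. 1 - x ^ Suc i) \<ge> 1/4 + x ^ k / 2" using Suc.IH by simp
    define y where "y = x ^ k"
    have y0: "0 \<le> y" using x0 by (simp add: y_def)
    have y1: "y \<le> 1/2"
    proof -
      have "x ^ k \<le> x ^ 1" using False x0 x1 by (intro power_decreasing) auto
      then show ?thesis using x1 by (simp add: y_def)
    qed
    have xy: "x * y \<le> 1/4" using mult_mono[OF x1 y1] x0 y0 by simp
    have f0: "0 \<le> 1 - x ^ Suc k"
    proof -
      have "x ^ Suc k \<le> 1" using x0 x1 by (intro power_le_one) auto
      then show ?thesis by simp
    qed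
    have "(\<Prod>i<Suc k. 1 - x ^ Suc i) = (\<Prod>i<k. 1 - x ^ Suc i) * (1 - x ^ Suc k)" by simp
    also have "\<dots> \<ge> (1/4 + y/2) * (1 - x * y)"
      using mult_right_mono[OF IH f0] by (simp add: y_def)
    finally have a: "(\<Prod>i<Suc k. 1 - x ^ Suc i) \<ge> (1/4 + y/2) * (1 - x * y)" .
    have b: "(1/4 + y/2) * (1 - x * y) - (1/4 + x*y/2) = y * (1/2 - 3*x/4 - x*y/2)"
      by (simp add: field_simps)
    have "y * (1/2 - 3*x/4 - x*y/2) \<ge> 0" using y0 xy x1 by (intro mult_nonneg_nonneg) auto
    then have "(1/4 + y/2) * (1 - x * y) \<ge> 1/4 + x*y/2" using b by linarith
    with a show ?thesis by (simp add: y_def)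
  qed
qed

lemma prod_one_minus_pow:
  fixes x :: real
  assumes "0 \<le> x" "x \<le> 1/2"
  shows "(\<Prod>i<k. 1 - x ^ Suc i) \<ge> 1/4"
proof (cases "k = 0")
  case True then show ?thesis by simp
next
  case False
  then have "(\<Prod>i<k. 1 - x ^ Suc i) \<ge> 1/4 + x ^ k / 2" using prod_one_minus_pow_aux[OF assms] by simp
  moreover have "x ^ k \<ge> 0" using assms by simp
  ultimately show ?thesis by linarith
qed

lemma ratio_bound:
  fixes q :: real
  assumes q: "q \<ge> 2" and kt: "k \<le> t" and tn: "t \<le> n"
  shows "(\<Prod>i<k. q^n - q^i) / (\<Prod>i<k. q^t - q^i) \<le> 4 * q ^ (k * (n - t))"
proof -
  define x where "x = 1 / q"
  have x0: "0 \<le> x" and x1: "x \<le> 1/2" using q by (auto simp: x_def field_simps)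
  have fac: "q^t - q^i = q^t * (1 - x^(t-i))" if "i \<le> t" for i
  proof -
    have "q^t = q^i * q^(t-i)" using that by (simp add: power_add[symmetric])
    moreover have "x^(t-i) * q^(t-i) = 1" using q by (simp add: x_def power_mult_distrib[symmetric])
    ultimately have "q^t * x^(t-i) = q^i" by (metis mult.assoc mult.commute mult_1_right)
    then show ?thesis by (simp add: algebra_simps)
  qed
  have den: "(\<Prod>i<k. q^t - q^i) = q^(t*k) * (\<Prod>i<k. 1 - x^(t-i))"
  proof -
    have "(\<Prod>i<k. q^t - q^i) = (\<Prod>i<k. q^t * (1 - x^(t-i)))"
      using kt by (intro prod.cong) (auto simp: fac)
    also have "\<dots> = q^(t*k) * (\<Prod>i<k. 1 - x^(t-i))"
      by (simp add: prod.distrib power_mult)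
    finally show ?thesis .
  qed
  have "(\<Prod>i<k. 1 - x^(t-i)) \<ge> (\<Prod>i<k. 1 - x^(k-i))"
  proof (rule prod_mono)
    fix i assume "i \<in> {..<k}"
    have "x^(t-i) \<le> x^(k-i)" using kt x0 x1 by (intro power_decreasing) auto
    moreover have "x^(k-i) \<le> 1" using x0 x1 by (intro power_le_one) auto
    ultimately show "0 \<le> 1 - x^(k-i) \<and> 1 - x^(k-i) \<le> 1 - x^(t-i)" by simp
  qed
  moreover have "(\<Prod>i<k. 1 - x^(k-i)) = (\<Prod>i<k. 1 - x ^ Suc i)"
  proof -
    have "(\<Prod>i<k. 1 - x ^ Suc i) = (\<Prod>i<k. (\<lambda>j. 1 - x^(k-j)) (k - Suc i))"
      by (intro prod.cong) auto
    also have "\<dots> = (\<Prod>i<k. 1 - x^(k-i))" by (rule prod.nat_diff_reindex)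
    finally show ?thesis by simp
  qed
  ultimately have P: "(\<Prod>i<k. 1 - x^(t-i)) \<ge> 1/4" using prod_one_minus_pow[OF x0 x1, of k] by linarith
  have num: "(\<Prod>i<k. q^n - q^i) \<le> q^(n*k)"
  proof -
    have "(\<Prod>i<k. q^n - q^i) \<le> (\<Prod>i<k. q^n)"
    proof (rule prod_mono)
      fix i assume i: "i \<in> {..<k}"
      have "q^i \<le> q^n" using i kt tn q by (intro power_increasing) auto
      then show "0 \<le> q^n - q^i \<and> q^n - q^i \<le> q^n" using q by simp
    qed
    then show ?thesis by (simp add: power_mult)
  qed
  have qtk: "q^(t*k) > 0" using q by simp
  have "(\<Prod>i<k. q^n - q^i) / (\<Prod>i<k. q^t - q^i) \<le> q^(n*k) / (q^(t*k) * (1/4))"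
    unfolding den
  proof (rule frac_le)
    show "0 \<le> q^(n*k)" using q by simp
    show "(\<Prod>i<k. q^n - q^i) \<le> q^(n*k)" by (rule num)
    show "0 < q^(t*k) * (1/4)" using qtk by simp
    show "q^(t*k) * (1/4) \<le> q^(t*k) * (\<Prod>i<k. 1 - x^(t-i))"
      using P qtk by (intro mult_left_mono) auto
  qed
  also have "q^(n*k) = q^(t*k) * q^(k*(n-t))"
  proof -
    have "n*k = t*k + k*(n-t)" using tn by (simp add: algebra_simps diff_mult_distrib2)
    then show ?thesis by (metis power_add)
  qed
  also have "q^(t*k) * q^(k*(n-t)) / (q^(t*k) * (1/4)) = q^(k*(n-t)) / (1/4)"
    using q by (intro mult_divide_mult_cancel_left) simp
  also have "\<dots> = 4 * q^(k*(n-t))" by simp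
  finally show ?thesis .
qed

lemma gauss_ratio:
  assumes q: "q \<ge> 2" and kt: "k \<le> t"
  shows "gauss_binom q n k / gauss_binom q t k
       = (\<Prod>i<k. real q^n - real q^i) / (\<Prod>i<k. real q^t - real q^i)"
proof -
  have qr: "real q \<ge> 2" using q by simp
  have c: "(\<Prod>i<k. real q^k - real q^i) \<noteq> 0"
  proof -
    have "real q^k - real q^i \<noteq> 0" if "i < k" for i
    proof -
      have "real q^i < real q^k" using that qr by (intro power_strict_increasing) auto
      then show ?thesis by simp
    qed
    then show ?thesis by (simp add: prod_zero_iff)
  qed
  have b: "(\<Prod>i<k. real q^t - real q^i) \<noteq> 0"
  proof -
    have "real q^t - real q^i \<noteq> 0" if "i < k" for i
    proof -
      have "real q^i < real q^t" using that kt qr by (intro power_strict_increasing) auto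
      then show ?thesis by simp
    qed
    then show ?thesis by (simp add: prod_zero_iff)
  qed
  show ?thesis unfolding gauss_binom_def prod_dividef using b c by (simp add: field_simps)
qed



lemma rank_ball_iff: "x \<in> rank_ball m n \<tau> r \<longleftrightarrow> x \<in> carrier_mat m n \<and> rk m (x - r) \<le> \<tau>"
  unfolding rank_ball_def rank_dist_def by simp

lemma count_rank_t:
  fixes C :: "'a::{field,finite} mat set"
  assumes q_def: "q = card (UNIV :: 'a set)"
    and C_sub: "C \<subseteq> carrier_mat m n"
    and C_dist: "min_rank_distance m C d"
    and r: "r \<in> carrier_mat m n"
    and d1: "d \<le> 2*t + 1" and d2: "t < d" and d3: "d \<le> n"
  shows "real (card {c \<in> C \<inter> rank_ball m n \<tau> r. rk m (c - r) = t})
          \<le> gauss_binom q n (2*t + 1 - d) / gauss_binom q t (2*t + 1 - d)"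
proof -
  define S where "S = {c \<in> C \<inter> rank_ball m n \<tau> r. rk m (c - r) = t}"
  define k where "k = 2*t + 1 - d"
  have kt: "k \<le> t" and kn: "k \<le> n" using d1 d2 d3 by (auto simp: k_def)
  have q2: "q \<ge> 2"
  proof -
    have "card {0::'a, 1} = 2" by simp
    moreover have "card {0::'a, 1} \<le> card (UNIV :: 'a set)" by (rule card_mono) auto
    ultimately show ?thesis using q_def by simp
  qed
  have SC: "S \<subseteq> carrier_mat m n" using C_sub unfolding S_def by auto
  have fS: "finite S" using finite_subset[OF SC finite_carrier_mat] .
  define F where "F = (\<lambda>c. LI (fv.span (rowsF (c - r))) k)"
  define Pt where "Pt = (\<Prod>i<k. q ^ t - q ^ i)"
  define Pn where "Pn = (\<Prod>i<k. q ^ n - q ^ i)"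
  have cmr: "c - r \<in> carrier_mat m n" if "c \<in> S" for c using that SC r by auto
  have dimc: "fv.dim (rowsF (c - r)) = t" if "c \<in> S" for c
    using rk_eq_rows[OF cmr[OF that]] that unfolding S_def by simp
  have cardF: "finite (F c) \<and> card (F c) = Pt" if "c \<in> S" for c
    using LI_card[OF finite_rowsF, of "c - r" k] dimc[OF that] q_def
    unfolding F_def Pt_def by simp
  have Fsub: "F c \<subseteq> LI (fv.span (stdE n)) k" if "c \<in> S" for c
    unfolding F_def by (rule LI_mono[OF rowsF_stdE[OF cmr[OF that]]])
  have disj: "F c1 \<inter> F c2 = {}" if c1: "c1 \<in> S" and c2: "c2 \<in> S" and ne: "c1 \<noteq> c2" for c1 c2
  proof (rule ccontr)
    assume "F c1 \<inter> F c2 \<noteq> {}"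
    then obtain xs where x1: "xs \<in> F c1" and x2: "xs \<in> F c2" by auto
    let ?X = "set xs"
    have X: "fv.independent ?X" "card ?X = k" "?X \<subseteq> fv.span (rowsF (c1 - r))"
      "?X \<subseteq> fv.span (rowsF (c2 - r))"
      using x1 x2 unfolding F_def LI_def by (auto simp: distinct_card)
    have c1C: "c1 \<in> carrier_mat m n" and c2C: "c2 \<in> carrier_mat m n" using c1 c2 SC by auto
    have "fv.dim (rowsF (c1 - c2)) + card ?X \<le> fv.dim (rowsF (c1 - r)) + fv.dim (rowsF (c2 - r))"
      by (rule dim_union_bound[OF finite_rowsF finite_rowsF X(3) X(4) X(1) rows_diff[OF c1C c2C r]])
    moreover have "c1 - c2 \<in> carrier_mat m n" using c1C c2C by auto
    ultimately have le: "rk m (c1 - c2) + k \<le> t + t"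
      using dimc[OF c1] dimc[OF c2] X(2) rk_eq_rows[of "c1 - c2" m n] by simp
    have "d \<le> rank_dist m c1 c2" using C_dist c1 c2 ne unfolding min_rank_distance_def S_def by auto
    then have "d \<le> rk m (c1 - c2)" by (simp add: rank_dist_def)
    with le d1 show False by (simp add: k_def)
  qed
  have "card S * Pt = (\<Sum>c\<in>S. card (F c))" using cardF by simp
  also have "\<dots> = card (\<Union>c\<in>S. F c)"
    by (rule card_UN_disjoint[symmetric]) (use fS cardF disj in auto)
  also have "\<dots> \<le> card (LI (fv.span (stdE n :: (nat \<Rightarrow> 'a) set)) k)"
  proof (rule Finite_Set.card_mono)
    show "finite (LI (fv.span (stdE n :: (nat \<Rightarrow> 'a) set)) k)" using LI_card[of "stdE n" k] stdE_props by auto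
    show "(\<Union>c\<in>S. F c) \<subseteq> LI (fv.span (stdE n)) k" using Fsub by auto
  qed
  also have "\<dots> = Pn"
  proof -
    have sE: "finite (stdE n :: (nat \<Rightarrow> 'a) set)" "fv.dim (stdE n :: (nat \<Rightarrow> 'a) set) = n"
      using stdE_props by blast+
    show ?thesis using LI_card[OF sE(1), of k] sE(2) q_def unfolding Pn_def by simp
  qed
  finally have main: "card S * Pt \<le> Pn" .
  have rPt: "real Pt = (\<Prod>i<k. real q ^ t - real q ^ i)"
  proof -
    have "q ^ i \<le> q ^ t" if "i < k" for i using that kt q2 by (intro power_increasing) auto
    then show ?thesis unfolding Pt_def by (simp add: of_nat_prod of_nat_diff)
  qed
  have rPn: "real Pn = (\<Prod>i<k. real q ^ n - real q ^ i)"
  proof -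
    have "q ^ i \<le> q ^ n" if "i < k" for i using that kn q2 by (intro power_increasing) auto
    then show ?thesis unfolding Pn_def by (simp add: of_nat_prod of_nat_diff)
  qed
  have Ptpos: "real Pt > 0"
  proof -
    have "real q ^ i < real q ^ t" if "i < k" for i using that kt q2 by (intro power_strict_increasing) auto
    then show ?thesis unfolding rPt by (intro prod_pos) auto
  qed
  have "real (card S) * real Pt \<le> real Pn" using main by (metis of_nat_le_iff of_nat_mult)
  then have "real (card S) \<le> real Pn / real Pt" using Ptpos by (simp add: pos_le_divide_eq)
  also have "\<dots> = gauss_binom q n k / gauss_binom q t k"
    unfolding rPt rPn using gauss_ratio[OF q2 kt] by simp
  finally show ?thesis unfolding S_def k_def .
qed

lemma count_low:
  fixes C :: "'a::{field,finite} mat set"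
  assumes C_sub: "C \<subseteq> carrier_mat m n"
    and C_dist: "min_rank_distance m C d"
    and r: "r \<in> carrier_mat m n"
    and f: "2 * f < d"
  shows "card {c \<in> C \<inter> rank_ball m n \<tau> r. rk m (c - r) \<le> f} \<le> 1"
proof -
  define L where "L = {c \<in> C \<inter> rank_ball m n \<tau> r. rk m (c - r) \<le> f}"
  have LC: "L \<subseteq> carrier_mat m n" using C_sub unfolding L_def by auto
  have fL: "finite L" using finite_subset[OF LC finite_carrier_mat] .
  have "c1 = c2" if c1: "c1 \<in> L" and c2: "c2 \<in> L" for c1 c2
  proof (rule ccontr)
    assume ne: "c1 \<noteq> c2"
    have c1C: "c1 \<in> carrier_mat m n" and c2C: "c2 \<in> carrier_mat m n" using c1 c2 LC by auto
    have "fv.dim (rowsF (c1 - c2)) \<le> fv.dim (rowsF (c1 - r)) + fv.dim (rowsF (c2 - r))"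
      using dim_union_bound[of "rowsF (c1 - r)" "rowsF (c2 - r)" "{}" "rowsF (c1 - c2)"]
        rows_diff[OF c1C c2C r] finite_rowsF[of "c1 - r"] finite_rowsF[of "c2 - r"] fv.independent_empty by simp
    moreover have "c1 - c2 \<in> carrier_mat m n" "c1 - r \<in> carrier_mat m n" "c2 - r \<in> carrier_mat m n"
      using c1C c2C r by auto
    ultimately have "rk m (c1 - c2) \<le> rk m (c1 - r) + rk m (c2 - r)"
      using rk_eq_rows[of "c1 - c2" m n] rk_eq_rows[of "c1 - r" m n] rk_eq_rows[of "c2 - r" m n]
      by simp
    moreover have "rk m (c1 - r) \<le> f" "rk m (c2 - r) \<le> f" using c1 c2 unfolding L_def by auto
    moreover have "d \<le> rank_dist m c1 c2" using C_dist c1 c2 ne unfolding min_rank_distance_def L_def by auto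
    ultimately show False using f by (simp add: rank_dist_def)
  qed
  then show ?thesis using card_le_Suc0_iff_eq[OF fL] unfolding L_def by auto
qed



theorem theorem2:
  fixes C :: "'a::{field,finite} mat set"
    and q d \<tau> n m :: nat
  assumes q_def: "q = card (UNIV :: 'a set)"
    and range: "(d - 1) div 2 \<le> \<tau>" "\<tau> < d" "d \<le> n" "n \<le> m"
    and C_sub: "C \<subseteq> carrier_mat m n"
    and C_dist: "min_rank_distance m C d"
  shows "real (Max {card (C \<inter> rank_ball m n \<tau> r) | r. r \<in> carrier_mat m n})
           \<le> 1 + (\<Sum>t = (d - 1) div 2 + 1..\<tau>.
                    gauss_binom q n (2 * t + 1 - d) / gauss_binom q t (2 * t + 1 - d))
  \<and> 1 + (\<Sum>t = (d - 1) div 2 + 1..\<tau>.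
                    gauss_binom q n (2 * t + 1 - d) / gauss_binom q t (2 * t + 1 - d))
           \<le> 1 + 4 * (\<Sum>t = (d - 1) div 2 + 1..\<tau>. real q ^ ((2 * t + 1 - d) * (n - t)))
  \<and> 1 + 4 * (\<Sum>t = (d - 1) div 2 + 1..\<tau>. real q ^ ((2 * t + 1 - d) * (n - t)))
           \<le> 1 + 4 * real (\<tau> - (d - 1) div 2)
                 * real q ^ ((2 * \<tau> + 1 - d) * (n - (d - 1) div 2 - 1))"
proof -
  define f where "f = (d - 1) div 2"
  define R where "R = (\<lambda>t. gauss_binom q n (2 * t + 1 - d) / gauss_binom q t (2 * t + 1 - d))"
  have q2: "q \<ge> 2"
  proof -
    have "card {0::'a, 1} = 2" by simp
    moreover have "card {0::'a, 1} \<le> card (UNIV :: 'a set)" by (rule card_mono) auto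
    ultimately show ?thesis using q_def by simp
  qed
  have tr: "d \<le> 2*t + 1" "t < d" "2*t + 1 - d \<le> t" if "t \<in> {f+1..\<tau>}" for t
    using that range unfolding f_def by auto
  have fC: "finite C" using finite_subset[OF C_sub finite_carrier_mat] .
  have bound: "real (card (C \<inter> rank_ball m n \<tau> r)) \<le> 1 + (\<Sum>t = f+1..\<tau>. R t)"
    if r: "r \<in> carrier_mat m n" for r
  proof -
    define D where "D = C \<inter> rank_ball m n \<tau> r"
    define low where "low = {c \<in> D. rk m (c - r) \<le> f}"
    define St where "St = (\<lambda>t. {c \<in> D. rk m (c - r) = t})"
    have fD: "finite D" using fC unfolding D_def by auto
    have sub: "D \<subseteq> low \<union> (\<Union>t\<in>{f+1..\<tau>}. St t)"
    proof
      fix c assume c: "c \<in> D"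
      then have "rk m (c - r) \<le> \<tau>" unfolding D_def by (simp add: rank_ball_iff)
      then show "c \<in> low \<union> (\<Union>t\<in>{f+1..\<tau>}. St t)"
        using c unfolding low_def St_def by (cases "rk m (c - r) \<le> f") auto
    qed
    have "card D \<le> card (low \<union> (\<Union>t\<in>{f+1..\<tau>}. St t))"
      by (rule card_mono[OF _ sub]) (use fD in \<open>auto simp: low_def St_def\<close>)
    also have "\<dots> \<le> card low + card (\<Union>t\<in>{f+1..\<tau>}. St t)" by (rule card_Un_le)
    also have "\<dots> \<le> card low + (\<Sum>t = f+1..\<tau>. card (St t))"
      using card_UN_le[of "{f+1..\<tau>}" St] by simp
    finally have c1: "real (card D) \<le> real (card low) + (\<Sum>t = f+1..\<tau>. real (card (St t)))"
      by (metis of_nat_add of_nat_le_iff of_nat_sum)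
    have "card low \<le> 1"
      unfolding low_def D_def
      using count_low[OF C_sub C_dist r, of f \<tau>] range unfolding f_def by fastforce
    moreover have "(\<Sum>t = f+1..\<tau>. real (card (St t))) \<le> (\<Sum>t = f+1..\<tau>. R t)"
    proof (rule sum_mono)
      fix t assume t: "t \<in> {f+1..\<tau>}"
      show "real (card (St t)) \<le> R t"
        unfolding St_def D_def R_def
        using count_rank_t[OF q_def C_sub C_dist r tr(1)[OF t] tr(2)[OF t] range(3)] by simp
    qed
    ultimately show ?thesis using c1 unfolding D_def by linarith
  qed
  define Vals where "Vals = {card (C \<inter> rank_ball m n \<tau> r) | r. r \<in> carrier_mat m n}"
  have "0\<^sub>m m n \<in> carrier_mat m n" by simp
  then have ne: "Vals \<noteq> {}" unfolding Vals_def by blast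
  have fin: "finite Vals"
  proof (rule finite_subset)
    show "Vals \<subseteq> {..card C}" unfolding Vals_def using fC by (auto intro: card_mono)
  qed simp
  obtain r where r: "r \<in> carrier_mat m n" and Mx: "Max Vals = card (C \<inter> rank_ball m n \<tau> r)"
    using Max_in[OF fin ne] unfolding Vals_def by auto
  have P1: "real (Max Vals) \<le> 1 + (\<Sum>t = f+1..\<tau>. R t)" using bound[OF r] Mx by simp
  have P2: "(\<Sum>t = f+1..\<tau>. R t) \<le> (\<Sum>t = f+1..\<tau>. 4 * real q ^ ((2 * t + 1 - d) * (n - t)))"
  proof (rule sum_mono)
    fix t assume t: "t \<in> {f+1..\<tau>}"
    have tn: "t \<le> n" using tr(2)[OF t] range by simp
    have "R t = (\<Prod>i<2*t+1-d. real q^n - real q^i) / (\<Prod>i<2*t+1-d. real q^t - real q^i)"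
      unfolding R_def by (rule gauss_ratio[OF q2 tr(3)[OF t]])
    also have "\<dots> \<le> 4 * real q ^ ((2 * t + 1 - d) * (n - t))"
      by (rule ratio_bound) (use q2 tr(3)[OF t] tn in auto)
    finally show "R t \<le> 4 * real q ^ ((2 * t + 1 - d) * (n - t))" .
  qed
  have P3: "(\<Sum>t = f+1..\<tau>. real q ^ ((2 * t + 1 - d) * (n - t)))
      \<le> real (\<tau> - f) * real q ^ ((2 * \<tau> + 1 - d) * (n - f - 1))"
  proof -
    have "(\<Sum>t = f+1..\<tau>. real q ^ ((2 * t + 1 - d) * (n - t)))
        \<le> of_nat (card {f+1..\<tau>}) * real q ^ ((2 * \<tau> + 1 - d) * (n - f - 1))"
    proof (rule sum_bounded_above)
      fix t assume t: "t \<in> {f+1..\<tau>}"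
      have "(2 * t + 1 - d) * (n - t) \<le> (2 * \<tau> + 1 - d) * (n - f - 1)"
        using t by (intro mult_le_mono) auto
      then show "real q ^ ((2 * t + 1 - d) * (n - t)) \<le> real q ^ ((2 * \<tau> + 1 - d) * (n - f - 1))"
        using q2 by (intro power_increasing) auto
    qed
    then show ?thesis by simp
  qed
  have P2': "1 + (\<Sum>t = f+1..\<tau>. R t) \<le> 1 + 4 * (\<Sum>t = f+1..\<tau>. real q ^ ((2 * t + 1 - d) * (n - t)))"
    using P2 by (simp add: sum_distrib_left)
  have P3': "1 + 4 * (\<Sum>t = f+1..\<tau>. real q ^ ((2 * t + 1 - d) * (n - t)))
      \<le> 1 + 4 * real (\<tau> - f) * real q ^ ((2 * \<tau> + 1 - d) * (n - f - 1))"
    using P3 by simp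
  show ?thesis using P1 P2' P3' unfolding Vals_def R_def f_def by simp
qed


end
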